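(* Let $n\ge1$. Let $\Gamma_1$ be a cocompact lattice in the $(4n+1)$-dimensional Heisenberg group $H_{2n}$. Let $\Gamma_2$ be a discrete subgroup of the universal cover $\widetilde{SL(2,\mathbb R)}$ with compact quotient. Then the compact manifold $(H_{2n}\times\widetilde{SL(2,\mathbb R)})/(\Gamma_1\times\Gamma_2)$ admits an invariant HPKT structure which is not strong.
   Context: The Heisenberg Lie algebra $\mathfrak h_{2n}$ has basis $X_1,\dots,X_{2n},Y_1,\dots,Y_{2n},Z$ with nonzero brackets $[X_j,Y_j]=Z$. $H_{2n}$ is the corresponding simply connected Lie group. An almost hyper-paracomplex structure on a manifold is a triple $(J_1,J_2,J_3)$ of endomorphisms of the tangent bundle with $J_1^2=J_2^2=\mathrm{id}$, $J_3^2=-\mathrm{id}$ and $J_1J_2=-J_2J_1=J_3$. It is hyper-paracomplex if each $J_a$ has vanishing Nijenhuis tensor. A metric $g$ is hyperparahermitian if $g(J_1X,J_1Y)=g(J_2X,J_2Y)=-g(J_3X,J_3Y)=-g(X,Y)$. An HPKT structure is a hyper-paracomplex structure together with a hyperparahermitian metric admitting a linear connection $\nabla$ with $\nabla g=\nabla J_a=0$ and totally skew-symmetric torsion $T^\nabla$. It is strong if the torsion 3-form is closed. "Invariant" means induced by left-invariant structures on the group, with the discrete subgroup acting by left translations. *)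

theory Defs
  imports Complex_Main
begin

text \<open>
  Left-invariant (= invariant) tensors on G = H_{2n} x universal cover of SL(2,R) are
  encoded on the Lie algebra g = h_{2n} + sl(2,R) of dimension 4n+4, in the basis
  (index: element)
    0 .. 2n-1   : X_1 .. X_{2n}
    2n .. 4n-1  : Y_1 .. Y_{2n}
    4n          : Z
    4n+1, 4n+2, 4n+3 : H, E, F   with [H,E]=2E, [H,F]=-2F, [E,F]=H.
  Vectors are functions nat => real whose coordinates of index >= 4n+4 vanish;
  endomorphisms / bilinear forms are given by their matrices nat => nat => real
  (only entries with indices < 4n+4 matter); a left-invariant linear connection is
  given by its coefficients Gam i j k, nabla_(e_i) e_j = sum_k Gam i j k e_k.
\<close>

definition gdim :: "nat \<Rightarrow> nat" where
  "gdim n = 4 * n + 4"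

definition gvecs :: "nat \<Rightarrow> (nat \<Rightarrow> real) set" where
  "gvecs n = {v. \<forall>i. gdim n \<le> i \<longrightarrow> v i = 0}"

definition sc :: "nat \<Rightarrow> nat \<Rightarrow> nat \<Rightarrow> nat \<Rightarrow> real" where
  "sc n i j k =
     (let m = 2 * n; Z = 2 * m; H = 2 * m + 1; E = 2 * m + 2; F = 2 * m + 3 in
      if i < m \<and> j = i + m \<and> k = Z then 1
      else if j < m \<and> i = j + m \<and> k = Z then -1
      else if i = H \<and> j = E \<and> k = E then 2
      else if i = E \<and> j = H \<and> k = E then -2
      else if i = H \<and> j = F \<and> k = F then -2
      else if i = F \<and> j = H \<and> k = F then 2
      else if i = E \<and> j = F \<and> k = H then 1
      else if i = F \<and> j = E \<and> k = H then -1
      else 0)"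

definition lbr :: "nat \<Rightarrow> (nat \<Rightarrow> real) \<Rightarrow> (nat \<Rightarrow> real) \<Rightarrow> (nat \<Rightarrow> real)" where
  "lbr n x y = (\<lambda>k. if k < gdim n then
      (\<Sum>i<gdim n. \<Sum>j<gdim n. x i * y j * sc n i j k) else 0)"

definition app :: "nat \<Rightarrow> (nat \<Rightarrow> nat \<Rightarrow> real) \<Rightarrow> (nat \<Rightarrow> real) \<Rightarrow> (nat \<Rightarrow> real)" where
  "app n A x = (\<lambda>i. if i < gdim n then (\<Sum>j<gdim n. A i j * x j) else 0)"

definition bil :: "nat \<Rightarrow> (nat \<Rightarrow> nat \<Rightarrow> real) \<Rightarrow> (nat \<Rightarrow> real) \<Rightarrow> (nat \<Rightarrow> real) \<Rightarrow> real" where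
  "bil n G x y = (\<Sum>i<gdim n. \<Sum>j<gdim n. G i j * x i * y j)"

definition conn :: "nat \<Rightarrow> (nat \<Rightarrow> nat \<Rightarrow> nat \<Rightarrow> real) \<Rightarrow> (nat \<Rightarrow> real) \<Rightarrow> (nat \<Rightarrow> real) \<Rightarrow> (nat \<Rightarrow> real)" where
  "conn n Gam x y = (\<lambda>k. if k < gdim n then
      (\<Sum>i<gdim n. \<Sum>j<gdim n. x i * y j * Gam i j k) else 0)"

definition nijenhuis :: "nat \<Rightarrow> (nat \<Rightarrow> nat \<Rightarrow> real) \<Rightarrow> (nat \<Rightarrow> real) \<Rightarrow> (nat \<Rightarrow> real) \<Rightarrow> (nat \<Rightarrow> real)" where
  "nijenhuis n J x y = (\<lambda>k. lbr n (app n J x) (app n J y) k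
      - app n J (lbr n (app n J x) y) k - app n J (lbr n x (app n J y)) k
      + app n J (app n J (lbr n x y)) k)"

definition almost_hyper_paracomplex ::
  "nat \<Rightarrow> (nat \<Rightarrow> nat \<Rightarrow> real) \<Rightarrow> (nat \<Rightarrow> nat \<Rightarrow> real) \<Rightarrow> (nat \<Rightarrow> nat \<Rightarrow> real) \<Rightarrow> bool" where
  "almost_hyper_paracomplex n J1 J2 J3 \<longleftrightarrow>
     (\<forall>x\<in>gvecs n.
        app n J1 (app n J1 x) = x \<and>
        app n J2 (app n J2 x) = x \<and>
        app n J3 (app n J3 x) = (\<lambda>i. - x i) \<and>
        app n J1 (app n J2 x) = app n J3 x \<and>
        app n J2 (app n J1 x) = (\<lambda>i. - app n J3 x i))"

definition hyper_paracomplex ::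
  "nat \<Rightarrow> (nat \<Rightarrow> nat \<Rightarrow> real) \<Rightarrow> (nat \<Rightarrow> nat \<Rightarrow> real) \<Rightarrow> (nat \<Rightarrow> nat \<Rightarrow> real) \<Rightarrow> bool" where
  "hyper_paracomplex n J1 J2 J3 \<longleftrightarrow>
     almost_hyper_paracomplex n J1 J2 J3 \<and>
     (\<forall>x\<in>gvecs n. \<forall>y\<in>gvecs n.
        nijenhuis n J1 x y = (\<lambda>_. 0) \<and>
        nijenhuis n J2 x y = (\<lambda>_. 0) \<and>
        nijenhuis n J3 x y = (\<lambda>_. 0))"

definition metric :: "nat \<Rightarrow> (nat \<Rightarrow> nat \<Rightarrow> real) \<Rightarrow> bool" where
  "metric n G \<longleftrightarrow>
     (\<forall>x\<in>gvecs n. \<forall>y\<in>gvecs n. bil n G x y = bil n G y x) \<and>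
     (\<forall>x\<in>gvecs n. (\<forall>y\<in>gvecs n. bil n G x y = 0) \<longrightarrow> x = (\<lambda>_. 0))"

definition hyperparahermitian ::
  "nat \<Rightarrow> (nat \<Rightarrow> nat \<Rightarrow> real) \<Rightarrow> (nat \<Rightarrow> nat \<Rightarrow> real) \<Rightarrow> (nat \<Rightarrow> nat \<Rightarrow> real)
     \<Rightarrow> (nat \<Rightarrow> nat \<Rightarrow> real) \<Rightarrow> bool" where
  "hyperparahermitian n G J1 J2 J3 \<longleftrightarrow> metric n G \<and>
     (\<forall>x\<in>gvecs n. \<forall>y\<in>gvecs n.
        bil n G (app n J1 x) (app n J1 y) = - bil n G x y \<and>
        bil n G (app n J2 x) (app n J2 y) = - bil n G x y \<and>
        - bil n G (app n J3 x) (app n J3 y) = - bil n G x y)"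

definition torsion :: "nat \<Rightarrow> (nat \<Rightarrow> nat \<Rightarrow> nat \<Rightarrow> real) \<Rightarrow> (nat \<Rightarrow> real) \<Rightarrow> (nat \<Rightarrow> real) \<Rightarrow> (nat \<Rightarrow> real)" where
  "torsion n Gam x y = (\<lambda>k. conn n Gam x y k - conn n Gam y x k - lbr n x y k)"

definition torsion_form :: "nat \<Rightarrow> (nat \<Rightarrow> nat \<Rightarrow> real) \<Rightarrow> (nat \<Rightarrow> nat \<Rightarrow> nat \<Rightarrow> real)
     \<Rightarrow> (nat \<Rightarrow> real) \<Rightarrow> (nat \<Rightarrow> real) \<Rightarrow> (nat \<Rightarrow> real) \<Rightarrow> real" where
  "torsion_form n G Gam x y z = bil n G (torsion n Gam x y) z"

definition hpkt_connection ::
  "nat \<Rightarrow> (nat \<Rightarrow> nat \<Rightarrow> real) \<Rightarrow> (nat \<Rightarrow> nat \<Rightarrow> real) \<Rightarrow> (nat \<Rightarrow> nat \<Rightarrow> real)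
     \<Rightarrow> (nat \<Rightarrow> nat \<Rightarrow> real) \<Rightarrow> (nat \<Rightarrow> nat \<Rightarrow> nat \<Rightarrow> real) \<Rightarrow> bool" where
  "hpkt_connection n G J1 J2 J3 Gam \<longleftrightarrow>
     (\<forall>x\<in>gvecs n. \<forall>y\<in>gvecs n. \<forall>z\<in>gvecs n.
        bil n G (conn n Gam x y) z + bil n G y (conn n Gam x z) = 0) \<and>
     (\<forall>x\<in>gvecs n. \<forall>y\<in>gvecs n.
        conn n Gam x (app n J1 y) = app n J1 (conn n Gam x y) \<and>
        conn n Gam x (app n J2 y) = app n J2 (conn n Gam x y) \<and>
        conn n Gam x (app n J3 y) = app n J3 (conn n Gam x y)) \<and>
     (\<forall>x\<in>gvecs n. \<forall>y\<in>gvecs n. \<forall>z\<in>gvecs n.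
        torsion_form n G Gam x y z = - torsion_form n G Gam x z y)"

text \<open>exterior derivative of a left-invariant 3-form c vanishes (Chevalley-Eilenberg)\<close>
definition torsion_closed :: "nat \<Rightarrow> (nat \<Rightarrow> nat \<Rightarrow> real) \<Rightarrow> (nat \<Rightarrow> nat \<Rightarrow> nat \<Rightarrow> real) \<Rightarrow> bool" where
  "torsion_closed n G Gam \<longleftrightarrow>
     (let c = torsion_form n G Gam; b = lbr n in
      \<forall>x0\<in>gvecs n. \<forall>x1\<in>gvecs n. \<forall>x2\<in>gvecs n. \<forall>x3\<in>gvecs n.
        - c (b x0 x1) x2 x3 + c (b x0 x2) x1 x3 - c (b x0 x3) x1 x2
        - c (b x1 x2) x0 x3 + c (b x1 x3) x0 x2 - c (b x2 x3) x0 x1 = 0)"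

definition invariant_HPKT ::
  "nat \<Rightarrow> (nat \<Rightarrow> nat \<Rightarrow> real) \<Rightarrow> (nat \<Rightarrow> nat \<Rightarrow> real) \<Rightarrow> (nat \<Rightarrow> nat \<Rightarrow> real)
     \<Rightarrow> (nat \<Rightarrow> nat \<Rightarrow> real) \<Rightarrow> bool" where
  "invariant_HPKT n G J1 J2 J3 \<longleftrightarrow>
     hyper_paracomplex n J1 J2 J3 \<and> hyperparahermitian n G J1 J2 J3 \<and>
     (\<exists>Gam. hpkt_connection n G J1 J2 J3 Gam)"

end

theory Submission
  imports Defs
begin

definition ev :: "nat \<Rightarrow> nat \<Rightarrow> real" where
  "ev a = (\<lambda>k. if k = a then 1 else 0)"

definition "iZ n = 4*n"
definition "iH n = 4*n+1"
definition "iE n = 4*n+2"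
definition "iF n = 4*n+3"
lemmas idx = iZ_def iH_def iE_def iF_def

lemma sum_one:
  fixes f :: "nat \<Rightarrow> real"
  assumes "a < N" "\<And>j. j < N \<Longrightarrow> j \<noteq> a \<Longrightarrow> f j = 0"
  shows "(\<Sum>j<N. f j) = f a"
proof -
  have "(\<Sum>j<N. f j) = f a + (\<Sum>j\<in>{..<N}-{a}. f j)"
    using assms(1) by (simp add: sum.remove)
  also have "(\<Sum>j\<in>{..<N}-{a}. f j) = 0" using assms(2) by (intro sum.neutral) auto
  finally show ?thesis by simp
qed

lemma sum_two:
  fixes f :: "nat \<Rightarrow> real"
  assumes "a < N" "b < N" "a \<noteq> b" "\<And>j. j < N \<Longrightarrow> j \<noteq> a \<Longrightarrow> j \<noteq> b \<Longrightarrow> f j = 0"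
  shows "(\<Sum>j<N. f j) = f a + f b"
proof -
  have "(\<Sum>j<N. f j) = f a + (\<Sum>j\<in>{..<N}-{a}. f j)"
    using assms(1) by (simp add: sum.remove)
  also have "(\<Sum>j\<in>{..<N}-{a}. f j) = f b + (\<Sum>j\<in>{..<N}-{a}-{b}. f j)"
    using assms(2,3) by (subst sum.remove[of _ b]) auto
  also have "(\<Sum>j\<in>{..<N}-{a}-{b}. f j) = 0" using assms(4) by (intro sum.neutral) auto
  finally show ?thesis by simp
qed

definition mat2 :: "(nat \<Rightarrow> nat) \<Rightarrow> (nat \<Rightarrow> real) \<Rightarrow> (nat \<Rightarrow> nat) \<Rightarrow> (nat \<Rightarrow> real) \<Rightarrow> nat \<Rightarrow> nat \<Rightarrow> real" where
  "mat2 p c q d i j = (if j = p i then c i else 0) + (if j = q i then d i else 0)"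

lemma app_mat2:
  assumes "\<And>i. i < gdim n \<Longrightarrow> p i < gdim n \<and> q i < gdim n"
  shows "app n (mat2 p c q d) x i = (if i < gdim n then c i * x (p i) + d i * x (q i) else 0)"
proof (cases "i < gdim n")
  case True
  have "(\<Sum>j<gdim n. mat2 p c q d i j * x j)
      = (\<Sum>j<gdim n. (if j = p i then c i * x (p i) else 0)) + (\<Sum>j<gdim n. (if j = q i then d i * x (q i) else 0))"
  proof -
    have "\<And>j. mat2 p c q d i j * x j = (if j = p i then c i * x (p i) else 0) + (if j = q i then d i * x (q i) else 0)"
      by (simp add: mat2_def ring_distribs)
    then show ?thesis by (simp add: sum.distrib)
  qed
  also have "\<dots> = c i * x (p i) + d i * x (q i)" using assms[OF True] by (simp add: sum.delta)
  finally show ?thesis using True by (simp add: app_def)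
qed (simp add: app_def)

definition "J1p n i = (if i < 4*n then i else if i = 4*n then 4*n+1 else if i = 4*n+1 then 4*n else i)"
definition "J1c n i = (if i < 2*n then 1 else if i < 4*n then -1 else if i = 4*n then 2 else
   if i = 4*n+1 then 1/2 else if i = 4*n+2 then 1 else if i = 4*n+3 then -1 else (0::real))"
definition "J2p n i = (if i < 2*n then i+2*n else if i < 4*n then i-2*n else if i = 4*n then 4*n+2 else
   if i = 4*n+1 then 4*n+2 else if i = 4*n+2 then 4*n else if i = 4*n+3 then 4*n else i)"
definition "J2q n i = (if i = 4*n \<or> i = 4*n+1 then 4*n+3 else if i = 4*n+2 \<or> i = 4*n+3 then 4*n+1 else i)"
definition "J2c n i = (if i < 4*n then -1 else if i = 4*n then 1 else if i = 4*n+1 then -1/2 else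
   if i = 4*n+2 then 1/2 else if i = 4*n+3 then 1/2 else (0::real))"
definition "J2d n i = (if i = 4*n then 1 else if i = 4*n+1 then 1/2 else if i = 4*n+2 then -1 else
   if i = 4*n+3 then 1 else (0::real))"
definition "J3c n i = (if i < 2*n then -1 else if i < 4*n then 1 else if i = 4*n then -1 else
   if i = 4*n+1 then 1/2 else if i = 4*n+2 then 1/2 else if i = 4*n+3 then -1/2 else (0::real))"
definition "J3d n i = (if i = 4*n then 1 else if i = 4*n+1 then 1/2 else if i = 4*n+2 then -1 else
   if i = 4*n+3 then -1 else (0::real))"
definition "Gp n i = (if i < n then i+3*n else if i < 2*n then i+n else if i < 3*n then i-n else
   if i < 4*n then i-3*n else if i = 4*n+2 then 4*n+3 else if i = 4*n+3 then 4*n+2 else i)"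
definition "Gc n i = (if i < n then 1 else if i < 3*n then -1 else if i < 4*n then 1 else
   if i = 4*n then 1 else if i = 4*n+1 then -4 else if i = 4*n+2 then -2 else if i = 4*n+3 then -2 else (0::real))"
definition "Rp n i = (if i < n then i+n else if i < 2*n then i-n else if i < 3*n then i+n else
   if i < 4*n then i-n else i)"
definition "Rc n i = (if i < n then -1 else if i < 2*n then 1 else if i < 3*n then -1 else
   if i < 4*n then 1 else (0::real))"

definition "J1m n = mat2 (J1p n) (J1c n) (J1p n) (\<lambda>_. 0)"
definition "J2m n = mat2 (J2p n) (J2c n) (J2q n) (J2d n)"
definition "J3m n = mat2 (J2p n) (J3c n) (J2q n) (J3d n)"
definition "Gm n = mat2 (Gp n) (Gc n) (Gp n) (\<lambda>_. 0)"
definition "Rm n = mat2 (Rp n) (Rc n) (Rp n) (\<lambda>_. 0)"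
definition "Gam0 n i j k = (if i = 4*n then Rm n k j else 0)"

lemma bJ1: "i < gdim n \<Longrightarrow> J1p n i < gdim n" by (auto simp: J1p_def gdim_def)
lemma bJ2: "i < gdim n \<Longrightarrow> J2p n i < gdim n \<and> J2q n i < gdim n" by (auto simp: J2p_def J2q_def gdim_def)
lemma bG: "i < gdim n \<Longrightarrow> Gp n i < gdim n" by (auto simp: Gp_def gdim_def)
lemma bR: "i < gdim n \<Longrightarrow> Rp n i < gdim n" by (auto simp: Rp_def gdim_def)

lemma appJ1: "app n (J1m n) x i = (if i < gdim n then J1c n i * x (J1p n i) else 0)"
  unfolding J1m_def by (subst app_mat2) (auto simp: bJ1)
lemma appJ2: "app n (J2m n) x i = (if i < gdim n then J2c n i * x (J2p n i) + J2d n i * x (J2q n i) else 0)"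
  unfolding J2m_def by (subst app_mat2) (auto simp: bJ2)
lemma appJ3: "app n (J3m n) x i = (if i < gdim n then J3c n i * x (J2p n i) + J3d n i * x (J2q n i) else 0)"
  unfolding J3m_def by (subst app_mat2) (auto simp: bJ2)
lemma appG: "app n (Gm n) x i = (if i < gdim n then Gc n i * x (Gp n i) else 0)"
  unfolding Gm_def by (subst app_mat2) (auto simp: bG)
lemma appR: "app n (Rm n) x i = (if i < gdim n then Rc n i * x (Rp n i) else 0)"
  unfolding Rm_def by (subst app_mat2) (auto simp: bR)

lemmas Jdefs = J1p_def J1c_def J2p_def J2q_def J2c_def J2d_def J3c_def J3d_def Gp_def Gc_def Rp_def Rc_def gdim_def

context fixes n j :: nat and x :: "nat \<Rightarrow> real" assumes j: "j < n"
begin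
lemma J1_b0: "app n (J1m n) x j = x j" using j by (simp add: appJ1 Jdefs; simp add: algebra_simps mult_2_right)
lemma J1_b1: "app n (J1m n) x (j+n) = x (j+n)" using j by (simp add: appJ1 Jdefs; simp add: algebra_simps mult_2_right)
lemma J1_b2: "app n (J1m n) x (j+2*n) = - x (j+2*n)" using j by (simp add: appJ1 Jdefs; simp add: algebra_simps mult_2_right)
lemma J1_b3: "app n (J1m n) x (j+3*n) = - x (j+3*n)" using j by (simp add: appJ1 Jdefs; simp add: algebra_simps mult_2_right)
lemma J2_b0: "app n (J2m n) x j = - x (j+2*n)" using j by (simp add: appJ2 Jdefs; simp add: algebra_simps mult_2_right)
lemma J2_b1: "app n (J2m n) x (j+n) = - x (j+3*n)" using j by (simp add: appJ2 Jdefs; simp add: algebra_simps mult_2_right)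
lemma J2_b2: "app n (J2m n) x (j+2*n) = - x j" using j by (simp add: appJ2 Jdefs; simp add: algebra_simps mult_2_right)
lemma J2_b3: "app n (J2m n) x (j+3*n) = - x (j+n)" using j by (simp add: appJ2 Jdefs; simp add: algebra_simps mult_2_right)
lemma J3_b0: "app n (J3m n) x j = - x (j+2*n)" using j by (simp add: appJ3 Jdefs; simp add: algebra_simps mult_2_right)
lemma J3_b1: "app n (J3m n) x (j+n) = - x (j+3*n)" using j by (simp add: appJ3 Jdefs; simp add: algebra_simps mult_2_right)
lemma J3_b2: "app n (J3m n) x (j+2*n) = x j" using j by (simp add: appJ3 Jdefs; simp add: algebra_simps mult_2_right)
lemma J3_b3: "app n (J3m n) x (j+3*n) = x (j+n)" using j by (simp add: appJ3 Jdefs; simp add: algebra_simps mult_2_right)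
lemma G_b0: "app n (Gm n) x j = x (j+3*n)" using j by (simp add: appG Jdefs; simp add: algebra_simps mult_2_right)
lemma G_b1: "app n (Gm n) x (j+n) = - x (j+2*n)" using j by (simp add: appG Jdefs; simp add: algebra_simps mult_2_right)
lemma G_b2: "app n (Gm n) x (j+2*n) = - x (j+n)" using j by (simp add: appG Jdefs; simp add: algebra_simps mult_2_right)
lemma G_b3: "app n (Gm n) x (j+3*n) = x j" using j by (simp add: appG Jdefs; simp add: algebra_simps mult_2_right)
lemma R_b0: "app n (Rm n) x j = - x (j+n)" using j by (simp add: appR Jdefs; simp add: algebra_simps mult_2_right)
lemma R_b1: "app n (Rm n) x (j+n) = x j" using j by (simp add: appR Jdefs; simp add: algebra_simps mult_2_right)
lemma R_b2: "app n (Rm n) x (j+2*n) = - x (j+3*n)" using j by (simp add: appR Jdefs; simp add: algebra_simps mult_2_right)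
lemma R_b3: "app n (Rm n) x (j+3*n) = x (j+2*n)" using j by (simp add: appR Jdefs; simp add: algebra_simps mult_2_right)
end

lemma J1_w: "app n (J1m n) x (iZ n) = 2 * x (iH n)" "app n (J1m n) x (iH n) = x (iZ n) / 2"
  "app n (J1m n) x (iE n) = x (iE n)" "app n (J1m n) x (iF n) = - x (iF n)"
  by (simp_all add: appJ1 Jdefs idx)
lemma J2_w: "app n (J2m n) x (iZ n) = x (iE n) + x (iF n)" "app n (J2m n) x (iH n) = - x (iE n) / 2 + x (iF n) / 2"
  "app n (J2m n) x (iE n) = x (iZ n) / 2 - x (iH n)" "app n (J2m n) x (iF n) = x (iZ n) / 2 + x (iH n)"
  by (simp_all add: appJ2 Jdefs idx)
lemma J3_w: "app n (J3m n) x (iZ n) = - x (iE n) + x (iF n)" "app n (J3m n) x (iH n) = x (iE n) / 2 + x (iF n) / 2"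
  "app n (J3m n) x (iE n) = x (iZ n) / 2 - x (iH n)" "app n (J3m n) x (iF n) = - x (iZ n) / 2 - x (iH n)"
  by (simp_all add: appJ3 Jdefs idx)
lemma G_w: "app n (Gm n) x (iZ n) = x (iZ n)" "app n (Gm n) x (iH n) = -4 * x (iH n)"
  "app n (Gm n) x (iE n) = -2 * x (iF n)" "app n (Gm n) x (iF n) = -2 * x (iE n)"
  by (simp_all add: appG Jdefs idx)
lemma R_w: "app n (Rm n) x (iZ n) = 0" "app n (Rm n) x (iH n) = 0"
  "app n (Rm n) x (iE n) = 0" "app n (Rm n) x (iF n) = 0"
  by (simp_all add: appR Jdefs idx)
lemma app_out: "gdim n \<le> i \<Longrightarrow> app n A x i = 0" by (simp add: app_def)

lemma sum_split_add: fixes b :: nat shows "(\<Sum>i<a+b. f i) = (\<Sum>i<a. f i) + (\<Sum>i<b. (f (i + a)::real))"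
  by (induction b) (simp_all add: add.commute)

lemma sum_blocks:
  fixes f :: "nat \<Rightarrow> real"
  shows "(\<Sum>i<gdim n. f i) = (\<Sum>j<n. f j + f (j+n) + f (j+2*n) + f (j+3*n))
     + f (4*n) + f (4*n+1) + f (4*n+2) + f (4*n+3)"
proof -
  have e: "gdim n = n + n + n + n + Suc (Suc (Suc (Suc 0)))" by (simp add: gdim_def)
  show ?thesis unfolding e sum_split_add
    by (simp add: sum.distrib algebra_simps mult_2_right numeral_eq_Suc)
qed

definition omg :: "nat \<Rightarrow> (nat \<Rightarrow> real) \<Rightarrow> (nat \<Rightarrow> real) \<Rightarrow> real" where
  "omg n x y = (\<Sum>j<n. x j * y (j+2*n) - x (j+2*n) * y j + x (j+n) * y (j+3*n) - x (j+3*n) * y (j+n))"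

lemma sc_Z: "sc n i j (4*n) = (if i < 2*n \<and> j = i + 2*n then 1 else if j < 2*n \<and> i = j+2*n then -1 else 0)"
  by (simp add: sc_def Let_def)
lemma sc_H: "sc n i j (4*n+1) = (if i = 4*n+2 \<and> j = 4*n+3 then 1 else if i = 4*n+3 \<and> j = 4*n+2 then -1 else 0)"
  by (simp add: sc_def Let_def)
lemma sc_E: "sc n i j (4*n+2) = (if i = 4*n+1 \<and> j = 4*n+2 then 2 else if i = 4*n+2 \<and> j = 4*n+1 then -2 else 0)"
  by (simp add: sc_def Let_def)
lemma sc_F: "sc n i j (4*n+3) = (if i = 4*n+1 \<and> j = 4*n+3 then -2 else if i = 4*n+3 \<and> j = 4*n+1 then 2 else 0)"
  by (simp add: sc_def Let_def)
lemma sc_V: "k < 4*n \<Longrightarrow> sc n i j k = 0"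
  by (simp add: sc_def Let_def)

lemma lbr_alt: "lbr n x y k = (if k < gdim n then (\<Sum>i<gdim n. (\<Sum>j<gdim n. x i * y j * sc n i j k)) else 0)"
  by (simp add: lbr_def)

lemma lbr_Z: "lbr n x y (iZ n) = omg n x y"
proof -
  have inner: "(\<Sum>j<gdim n. x i * y j * sc n i j (4*n)) =
     (if i < 2*n then x i * y (i+2*n) else if i < 4*n then - (x i * y (i-2*n)) else 0)" for i
  proof (cases "i < 2*n")
    case True
    then show ?thesis by (subst sum_one[of "i+2*n"]) (auto simp: sc_Z gdim_def)
  next
    case False
    show ?thesis
    proof (cases "i < 4*n")
      case True
      then show ?thesis using False by (subst sum_one[of "i-2*n"]) (auto simp: sc_Z gdim_def)
    next
      case F2: False
      then show ?thesis using False by (auto simp: sc_Z gdim_def intro!: sum.neutral)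
    qed
  qed
  define g where "g i = (if i < 2*n then x i * y (i+2*n) else if i < 4*n then - (x i * y (i-2*n)) else 0)" for i
  have "lbr n x y (4*n) = (\<Sum>i<gdim n. g i)"
    unfolding lbr_alt inner g_def by (simp add: gdim_def)
  also have "\<dots> = omg n x y"
    unfolding sum_blocks omg_def
  proof -
    have w: "g (4*n) = 0" "g (4*n+1) = 0" "g (4*n+2) = 0" "g (4*n+3) = 0" by (simp_all add: g_def)
    have b: "g j + g (j+n) + g (j+2*n) + g (j+3*n) = x j * y (j+2*n) - x (j+2*n) * y j + x (j+n) * y (j+3*n) - x (j+3*n) * y (j+n)"
      if "j < n" for j
    proof -
      have f: "j<2*n" "j+n<2*n" "\<not> j+2*n<2*n" "j+2*n<4*n" "\<not> j+3*n < 2*n" "j+3*n<4*n" "j+3*n-2*n = j+n" "j+2*n-2*n = j"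
        using that by linarith+
      show ?thesis unfolding g_def using f by (simp add: algebra_simps)
    qed
    show "(\<Sum>j<n. g j + g (j + n) + g (j + 2 * n) + g (j + 3 * n)) + g (4 * n) + g (4 * n + 1) + g (4 * n + 2) + g (4 * n + 3) =
    (\<Sum>j<n. x j * y (j + 2 * n) - x (j + 2 * n) * y j + x (j + n) * y (j + 3 * n) - x (j + 3 * n) * y (j + n))"
      unfolding w using b by simp
  qed
  finally show ?thesis by (simp add: iZ_def)
qed
lemma dsum2:
  fixes x y :: "nat \<Rightarrow> real"
  assumes "i1 \<noteq> i2" "i1 < N" "j1 < N" "i2 < N" "j2 < N"
    "\<And>i j. s i j = (if i = i1 \<and> j = j1 then v1 else if i = i2 \<and> j = j2 then v2 else 0)"
  shows "(\<Sum>i<N. \<Sum>j<N. x i * y j * s i j) = v1 * x i1 * y j1 + v2 * x i2 * y j2"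
proof -
  have inner: "(\<Sum>j<N. x i * y j * s i j) = (if i = i1 then v1 * x i1 * y j1 else if i = i2 then v2 * x i2 * y j2 else 0)" for i
  proof (cases "i = i1")
    case True
    then show ?thesis using assms by (subst sum_one[of j1]) auto
  next
    case False
    show ?thesis
    proof (cases "i = i2")
      case True
      then show ?thesis using assms False by (subst sum_one[of j2]) auto
    next
      case F2: False
      then show ?thesis using assms False by (auto intro!: sum.neutral)
    qed
  qed
  show ?thesis unfolding inner using assms by (subst sum_two[of i1 _ i2]) auto
qed

lemma lbr_H: "lbr n x y (iH n) = x (iE n) * y (iF n) - x (iF n) * y (iE n)"
  unfolding lbr_alt idx by (subst dsum2[of "4*n+2" "4*n+3" _ "4*n+3" "4*n+2" _ 1 "-1"]) (auto simp: sc_def Let_def gdim_def)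
lemma lbr_E: "lbr n x y (iE n) = 2 * (x (iH n) * y (iE n) - x (iE n) * y (iH n))"
  unfolding lbr_alt idx by (subst dsum2[of "4*n+1" "4*n+2" _ "4*n+2" "4*n+1" _ 2 "-2"]) (auto simp: sc_def Let_def gdim_def)
lemma lbr_F: "lbr n x y (iF n) = -2 * (x (iH n) * y (iF n) - x (iF n) * y (iH n))"
  unfolding lbr_alt idx by (subst dsum2[of "4*n+1" "4*n+3" _ "4*n+3" "4*n+1" _ "-2" 2]) (auto simp: sc_def Let_def gdim_def)
lemma lbr_V: "k < 4*n \<Longrightarrow> lbr n x y k = 0"
  unfolding lbr_alt by (simp add: sc_V)
lemma lbr_out: "gdim n \<le> k \<Longrightarrow> lbr n x y k = 0"
  unfolding lbr_alt by simp


lemmas Jb = J1_b0 J1_b1 J1_b2 J1_b3 J2_b0 J2_b1 J2_b2 J2_b3 J3_b0 J3_b1 J3_b2 J3_b3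
  G_b0 G_b1 G_b2 G_b3 R_b0 R_b1 R_b2 R_b3
lemmas Jw = J1_w J2_w J3_w G_w R_w

lemma lbr_b:
  assumes "j < n"
  shows "lbr n x y j = 0" "lbr n x y (j+n) = 0" "lbr n x y (j+2*n) = 0" "lbr n x y (j+3*n) = 0"
  using assms by (auto intro!: lbr_V)

lemma vec_eqI:
  fixes f g :: "nat \<Rightarrow> real"
  assumes "\<And>j. j<n \<Longrightarrow> f j = g j" "\<And>j. j<n \<Longrightarrow> f (j+n) = g (j+n)"
    "\<And>j. j<n \<Longrightarrow> f (j+2*n) = g (j+2*n)" "\<And>j. j<n \<Longrightarrow> f (j+3*n) = g (j+3*n)"
    "f (iZ n) = g (iZ n)" "f (iH n) = g (iH n)" "f (iE n) = g (iE n)" "f (iF n) = g (iF n)"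
    "\<And>k. gdim n \<le> k \<Longrightarrow> f k = g k"
  shows "f = g"
proof
  fix k
  consider "k < n" | "n \<le> k" "k < 2*n" | "2*n \<le> k" "k < 3*n" | "3*n \<le> k" "k < 4*n"
    | "k = iZ n" | "k = iH n" | "k = iE n" | "k = iF n" | "gdim n \<le> k"
    unfolding idx gdim_def by linarith
  then show "f k = g k"
  proof cases
    case 2
    then show ?thesis using assms(2)[of "k-n"] by simp
  next
    case 3
    then show ?thesis using assms(3)[of "k-2*n"] by simp
  next
    case 4
    then show ?thesis using assms(4)[of "k-3*n"] by simp
  qed (use assms in auto)
qed

lemma gvecs_out: "x \<in> gvecs n \<Longrightarrow> gdim n \<le> k \<Longrightarrow> x k = 0"
  by (simp add: gvecs_def)

lemma ahp: "almost_hyper_paracomplex n (J1m n) (J2m n) (J3m n)"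
  unfolding almost_hyper_paracomplex_def
  apply (intro ballI conjI vec_eqI[where n=n])
  apply (simp_all add: Jb Jw app_out gvecs_out)
  apply (simp_all add: field_simps)
  done

lemma omg_J1: "omg n (app n (J1m n) x) (app n (J1m n) y) = - omg n x y"
  unfolding omg_def sum_negf[symmetric] by (rule sum.cong) (simp_all add: Jb)
lemma omg_J2: "omg n (app n (J2m n) x) (app n (J2m n) y) = - omg n x y"
  unfolding omg_def sum_negf[symmetric] by (rule sum.cong) (simp_all add: Jb)
lemma omg_J3: "omg n (app n (J3m n) x) (app n (J3m n) y) = omg n x y"
  unfolding omg_def by (rule sum.cong) (simp_all add: Jb)
lemma omg_J1s: "omg n (app n (J1m n) x) y = - omg n x (app n (J1m n) y)"
  unfolding omg_def sum_negf[symmetric] by (rule sum.cong) (simp_all add: Jb)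
lemma omg_J2s: "omg n (app n (J2m n) x) y = - omg n x (app n (J2m n) y)"
  unfolding omg_def sum_negf[symmetric] by (rule sum.cong) (simp_all add: Jb)
lemma omg_J3s: "omg n (app n (J3m n) x) y = - omg n x (app n (J3m n) y)"
  unfolding omg_def sum_negf[symmetric] by (rule sum.cong) (simp_all add: Jb)

lemmas lbrs = lbr_b lbr_Z lbr_H lbr_E lbr_F lbr_out

lemma nij1: "nijenhuis n (J1m n) x y = (\<lambda>_. 0)"
  unfolding nijenhuis_def
  apply (rule vec_eqI[where n=n])
  apply (simp_all add: Jb Jw lbrs app_out omg_J1)
  using omg_J1s[of n x y] apply (simp_all add: field_simps)
  done
lemma nij2: "nijenhuis n (J2m n) x y = (\<lambda>_. 0)"
  unfolding nijenhuis_def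
  apply (rule vec_eqI[where n=n])
  apply (simp_all add: Jb Jw lbrs app_out omg_J2)
  using omg_J2s[of n x y] apply (simp_all add: field_simps)
  done
lemma nij3: "nijenhuis n (J3m n) x y = (\<lambda>_. 0)"
  unfolding nijenhuis_def
  apply (rule vec_eqI[where n=n])
  apply (simp_all add: Jb Jw lbrs app_out omg_J3)
  using omg_J3s[of n x y] apply (simp_all add: field_simps)
  done

lemma sum_blocks2:
  fixes f :: "nat \<Rightarrow> real"
  shows "(\<Sum>i<gdim n. f i) = (\<Sum>j<n. f j + f (j+n) + f (j+2*n) + f (j+3*n))
     + f (iZ n) + f (iH n) + f (iE n) + f (iF n)"
  unfolding sum_blocks idx ..

lemma bil_app: "bil n A x y = (\<Sum>i<gdim n. x i * app n A y i)"
  by (simp add: bil_def app_def sum_distrib_left mult_ac)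

definition "bilsum n x y = (\<Sum>j<n. x j * y (j+3*n) - x (j+n) * y (j+2*n) - x (j+2*n) * y (j+n) + x (j+3*n) * y j)"

lemma bilG: "bil n (Gm n) x y = bilsum n x y + x (iZ n) * y (iZ n) - 4 * (x (iH n) * y (iH n))
   - 2 * (x (iE n) * y (iF n)) - 2 * (x (iF n) * y (iE n))"
  unfolding bil_app sum_blocks2 bilsum_def
  by (simp add: Jb Jw cong: sum.cong_simp)

lemma bil_sym: "bil n (Gm n) x y = bil n (Gm n) y x"
  unfolding bilG bilsum_def by (simp add: algebra_simps cong: sum.cong_simp)

lemma metric_G: "metric n (Gm n)"
  unfolding metric_def
proof (intro conjI ballI impI)
  fix x y assume "x \<in> gvecs n" "y \<in> gvecs n"
  show "bil n (Gm n) x y = bil n (Gm n) y x" by (rule bil_sym)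
next
  fix x assume x: "x \<in> gvecs n" and h: "\<forall>y\<in>gvecs n. bil n (Gm n) x y = 0"
  have evg: "l < gdim n \<Longrightarrow> ev l \<in> gvecs n" for l by (simp add: gvecs_def ev_def)
  have hb: "l < gdim n \<Longrightarrow> bil n (Gm n) x (ev l) = 0" for l using h evg by blast
  show "x = (\<lambda>_. 0)"
  proof (rule vec_eqI[where n=n])
    fix j assume j: "j < n"
    have "bil n (Gm n) x (ev (j+3*n)) = x j"
      unfolding bil_app appG using j by (subst sum_one[of j]) (auto simp: Gp_def Gc_def ev_def gdim_def)
    then show "x j = 0" using hb[of "j+3*n"] j by (simp add: gdim_def)
    have "bil n (Gm n) x (ev (j+2*n)) = - x (j+n)"
      unfolding bil_app appG using j by (subst sum_one[of "j+n"]) (auto simp: Gp_def Gc_def ev_def gdim_def)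
    then show "x (j+n) = 0" using hb[of "j+2*n"] j by (simp add: gdim_def)
    have "bil n (Gm n) x (ev (j+n)) = - x (j+2*n)"
      unfolding bil_app appG using j by (subst sum_one[of "j+2*n"]) (auto simp: Gp_def Gc_def ev_def gdim_def)
    then show "x (j+2*n) = 0" using hb[of "j+n"] j by (simp add: gdim_def)
    have "bil n (Gm n) x (ev j) = x (j+3*n)"
      unfolding bil_app appG using j by (subst sum_one[of "j+3*n"]) (auto simp: Gp_def Gc_def ev_def gdim_def)
    then show "x (j+3*n) = 0" using hb[of "j"] j by (simp add: gdim_def)
  next
    have "bil n (Gm n) x (ev (iZ n)) = x (iZ n)"
      unfolding bil_app appG by (subst sum_one[of "iZ n"]) (auto simp: Gp_def Gc_def ev_def gdim_def idx)
    then show "x (iZ n) = 0" using hb[of "iZ n"] by (simp add: gdim_def idx)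
  next
    have "bil n (Gm n) x (ev (iH n)) = -4 * x (iH n)"
      unfolding bil_app appG by (subst sum_one[of "iH n"]) (auto simp: Gp_def Gc_def ev_def gdim_def idx)
    then show "x (iH n) = 0" using hb[of "iH n"] by (simp add: gdim_def idx)
  next
    have "bil n (Gm n) x (ev (iF n)) = -2 * x (iE n)"
      unfolding bil_app appG by (subst sum_one[of "iE n"]) (auto simp: Gp_def Gc_def ev_def gdim_def idx)
    then show "x (iE n) = 0" using hb[of "iF n"] by (simp add: gdim_def idx)
  next
    have "bil n (Gm n) x (ev (iE n)) = -2 * x (iF n)"
      unfolding bil_app appG by (subst sum_one[of "iF n"]) (auto simp: Gp_def Gc_def ev_def gdim_def idx)
    then show "x (iF n) = 0" using hb[of "iE n"] by (simp add: gdim_def idx)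
  next
    fix k assume "gdim n \<le> k" then show "x k = 0" using x by (simp add: gvecs_def)
  qed
qed

lemma bilsum_J1: "bilsum n (app n (J1m n) x) (app n (J1m n) y) = - bilsum n x y"
  unfolding bilsum_def sum_negf[symmetric] by (rule sum.cong) (simp_all add: Jb)
lemma bilsum_J2: "bilsum n (app n (J2m n) x) (app n (J2m n) y) = - bilsum n x y"
  unfolding bilsum_def sum_negf[symmetric] by (rule sum.cong) (simp_all add: Jb)
lemma bilsum_J3: "bilsum n (app n (J3m n) x) (app n (J3m n) y) = bilsum n x y"
  unfolding bilsum_def by (rule sum.cong) (simp_all add: Jb)

lemma hph: "hyperparahermitian n (Gm n) (J1m n) (J2m n) (J3m n)"
  unfolding hyperparahermitian_def
  apply (intro conjI metric_G ballI)
  unfolding bilG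
  apply (simp_all add: bilsum_J1 bilsum_J2 bilsum_J3 Jw)
  apply (simp_all add: field_simps)
  done

lemma conn_cf: "conn n (Gam0 n) x y k = (if k < gdim n then x (iZ n) * app n (Rm n) y k else 0)"
proof (cases "k < gdim n")
  case True
  have "conn n (Gam0 n) x y k = (\<Sum>i<gdim n. \<Sum>j<gdim n. x i * y j * Gam0 n i j k)"
    using True by (simp add: conn_def)
  also have "\<dots> = (\<Sum>j<gdim n. x (iZ n) * y j * Gam0 n (iZ n) j k)"
    by (rule sum_one) (auto simp: Gam0_def idx gdim_def)
  also have "\<dots> = x (iZ n) * app n (Rm n) y k"
    using True by (simp add: app_def Gam0_def idx sum_distrib_left mult_ac)
  finally show ?thesis using True by simp
qed (simp add: conn_def)

lemma conn_b:
  assumes "j < n"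
  shows "conn n (Gam0 n) x y j = - (x (iZ n) * y (j+n))"
    "conn n (Gam0 n) x y (j+n) = x (iZ n) * y j"
    "conn n (Gam0 n) x y (j+2*n) = - (x (iZ n) * y (j+3*n))"
    "conn n (Gam0 n) x y (j+3*n) = x (iZ n) * y (j+2*n)"
  using assms by (simp_all add: conn_cf Jb gdim_def)

lemma conn_w:
  "conn n (Gam0 n) x y (iZ n) = 0" "conn n (Gam0 n) x y (iH n) = 0"
  "conn n (Gam0 n) x y (iE n) = 0" "conn n (Gam0 n) x y (iF n) = 0"
  by (simp_all add: conn_cf Jw)

lemma conn_out: "gdim n \<le> k \<Longrightarrow> conn n Gam x y k = 0"
  by (simp add: conn_def)

lemma tor_cf: "torsion n Gam x y k = conn n Gam x y k - conn n Gam y x k - lbr n x y k"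
  by (simp add: torsion_def)

lemma bilsum_conn: "bilsum n (conn n (Gam0 n) x y) z + bilsum n y (conn n (Gam0 n) x z) = 0"
  unfolding bilsum_def sum.distrib[symmetric]
  by (intro sum.neutral ballI) (simp add: conn_b; simp add: algebra_simps)

lemma tor_block: "bilsum n (torsion n (Gam0 n) x y) z - omg n x y * z (iZ n)
   + (bilsum n (torsion n (Gam0 n) x z) y - omg n x z * y (iZ n)) = 0"
  unfolding bilsum_def omg_def sum_distrib_right sum_subtractf[symmetric] sum.distrib[symmetric]
  by (intro sum.neutral ballI) (simp add: tor_cf conn_b lbr_b; simp add: algebra_simps)

lemma hpkt_Gam0: "hpkt_connection n (Gm n) (J1m n) (J2m n) (J3m n) (Gam0 n)"
  unfolding hpkt_connection_def
proof (intro conjI ballI)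
  fix x y z :: "nat \<Rightarrow> real"
  show "bil n (Gm n) (conn n (Gam0 n) x y) z + bil n (Gm n) y (conn n (Gam0 n) x z) = 0"
    using bilsum_conn[of n x y z] unfolding bilG by (simp add: conn_w)
  show "conn n (Gam0 n) x (app n (J1m n) y) = app n (J1m n) (conn n (Gam0 n) x y)"
    by (rule vec_eqI[where n=n]) (simp_all add: conn_b conn_w Jb Jw conn_out app_out)
  show "conn n (Gam0 n) x (app n (J2m n) y) = app n (J2m n) (conn n (Gam0 n) x y)"
    by (rule vec_eqI[where n=n]) (simp_all add: conn_b conn_w Jb Jw conn_out app_out)
  show "conn n (Gam0 n) x (app n (J3m n) y) = app n (J3m n) (conn n (Gam0 n) x y)"
    by (rule vec_eqI[where n=n]) (simp_all add: conn_b conn_w Jb Jw conn_out app_out)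
  show "torsion_form n (Gm n) (Gam0 n) x y z = - torsion_form n (Gm n) (Gam0 n) x z y"
    using tor_block[of n x y z] unfolding torsion_form_def bilG
    by (simp add: tor_cf conn_w lbr_Z lbr_H lbr_E lbr_F algebra_simps)
qed


lemma idx_ne: fixes n :: nat assumes "1 \<le> n" shows "0 \<noteq> n" "0 \<noteq> (2*n)" "0 \<noteq> (3*n)" "0 \<noteq> (iZ n)" "0 \<noteq> (iH n)" "0 \<noteq> (iE n)" "0 \<noteq> (iF n)" "n \<noteq> 0" "n \<noteq> (2*n)" "n \<noteq> (3*n)" "n \<noteq> (iZ n)" "n \<noteq> (iH n)" "n \<noteq> (iE n)" "n \<noteq> (iF n)" "(2*n) \<noteq> 0" "(2*n) \<noteq> n" "(2*n) \<noteq> (3*n)" "(2*n) \<noteq> (iZ n)" "(2*n) \<noteq> (iH n)" "(2*n) \<noteq> (iE n)" "(2*n) \<noteq> (iF n)" "(3*n) \<noteq> 0" "(3*n) \<noteq> n" "(3*n) \<noteq> (2*n)" "(3*n) \<noteq> (iZ n)" "(3*n) \<noteq> (iH n)" "(3*n) \<noteq> (iE n)" "(3*n) \<noteq> (iF n)" "(iZ n) \<noteq> 0" "(iZ n) \<noteq> n" "(iZ n) \<noteq> (2*n)" "(iZ n) \<noteq> (3*n)" "(iZ n) \<noteq> (iH n)" "(iZ n) \<noteq> (iE n)" "(iZ n) \<noteq> (iF n)" "(iH n) \<noteq> 0" "(iH n) \<noteq> n" "(iH n) \<noteq> (2*n)" "(iH n) \<noteq> (3*n)" "(iH n) \<noteq>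 (iZ n)" "(iH n) \<noteq> (iE n)" "(iH n) \<noteq> (iF n)" "(iE n) \<noteq> 0" "(iE n) \<noteq> n" "(iE n) \<noteq> (2*n)" "(iE n) \<noteq> (3*n)" "(iE n) \<noteq> (iZ n)" "(iE n) \<noteq> (iH n)" "(iE n) \<noteq> (iF n)" "(iF n) \<noteq> 0" "(iF n) \<noteq> n" "(iF n) \<noteq> (2*n)" "(iF n) \<noteq> (3*n)" "(iF n) \<noteq> (iZ n)" "(iF n) \<noteq> (iH n)" "(iF n) \<noteq> (iE n)"
  using assms by (simp_all add: idx)
lemma idx_lt: "0 < gdim n" "n < gdim n" "(2*n) < gdim n" "(3*n) < gdim n" "(iZ n) < gdim n" "(iH n) < gdim n" "(iE n) < gdim n" "(iF n) < gdim n"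
  by (simp_all add: idx gdim_def)


lemma ev_app: "ev a b = (if b = a then 1 else 0)" by (simp add: ev_def)

lemma sum_ev1: fixes f :: "nat \<Rightarrow> real" shows "a < N \<Longrightarrow> (\<Sum>j<N. (if j = a then 1 else 0) * f j) = f a"
  by (subst sum_one[where a=a]) auto

lemma conn_evl: "a < gdim n \<Longrightarrow> k < gdim n \<Longrightarrow> conn n Gam (ev a) y k = (\<Sum>j<gdim n. y j * Gam a j k)"
proof -
  assume a: "a < gdim n" and k: "k < gdim n"
  have "conn n Gam (ev a) y k = (\<Sum>i<gdim n. \<Sum>j<gdim n. ev a i * y j * Gam i j k)"
    using k by (simp add: conn_def)
  also have "\<dots> = (\<Sum>j<gdim n. ev a a * y j * Gam a j k)"
    using a by (intro sum_one) (auto simp: ev_def)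
  finally show ?thesis by (simp add: ev_def)
qed

lemma conn_ev: "a < gdim n \<Longrightarrow> b < gdim n \<Longrightarrow> k < gdim n \<Longrightarrow> conn n Gam (ev a) (ev b) k = Gam a b k"
  by (simp add: conn_evl) (subst sum_one[of b], auto simp: ev_def)

lemma bilG_ev:
  assumes n: "1 \<le> n"
  shows "bil n (Gm n) v (ev 0) = v (3*n)" "bil n (Gm n) v (ev n) = - v (2*n)"
    "bil n (Gm n) v (ev (2*n)) = - v n" "bil n (Gm n) v (ev (3*n)) = v 0"
    "bil n (Gm n) v (ev (iZ n)) = v (iZ n)" "bil n (Gm n) v (ev (iH n)) = -4 * v (iH n)"
    "bil n (Gm n) v (ev (iE n)) = -2 * v (iF n)" "bil n (Gm n) v (ev (iF n)) = -2 * v (iE n)"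
  unfolding bil_app appG
  using n apply (subst sum_one[of "3*n"]; auto simp: Gp_def Gc_def ev_def gdim_def)
  using n apply (subst sum_one[of "2*n"]; auto simp: Gp_def Gc_def ev_def gdim_def)
  using n apply (subst sum_one[of "n"]; auto simp: Gp_def Gc_def ev_def gdim_def)
  using n apply (subst sum_one[of "0"]; auto simp: Gp_def Gc_def ev_def gdim_def)
  apply (subst sum_one[of "iZ n"]; auto simp: Gp_def Gc_def ev_def gdim_def idx)
  apply (subst sum_one[of "iH n"]; auto simp: Gp_def Gc_def ev_def gdim_def idx)
  apply (subst sum_one[of "iF n"]; auto simp: Gp_def Gc_def ev_def gdim_def idx)
  apply (subst sum_one[of "iE n"]; auto simp: Gp_def Gc_def ev_def gdim_def idx)
  done

lemma bilG_evl: "bil n (Gm n) (ev a) v = bil n (Gm n) v (ev a)"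
  by (rule bil_sym)

lemma lbr_V0:
  assumes n: "1 \<le> n"
  shows "lbr n x y 0 = 0" "lbr n x y n = 0" "lbr n x y (2*n) = 0" "lbr n x y (3*n) = 0"
  using n by (simp_all add: lbr_V)

lemma omg_ev:
  assumes n: "1 \<le> n"
  shows "omg n (ev (3*n)) (ev n) = -1" "omg n (ev (2*n)) (ev 0) = -1"
proof -
  have "omg n (ev (3*n)) (ev n) = (\<Sum>j<n. (if j = 0 then -1 else 0))"
    unfolding omg_def by (rule sum.cong) (auto simp: ev_def)
  also have "\<dots> = -1" using n by (simp add: sum.delta)
  finally show "omg n (ev (3*n)) (ev n) = -1" .
  have "omg n (ev (2*n)) (ev 0) = (\<Sum>j<n. (if j = 0 then -1 else 0))"
    unfolding omg_def by (rule sum.cong) (auto simp: ev_def)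
  also have "\<dots> = -1" using n by (simp add: sum.delta)
  finally show "omg n (ev (2*n)) (ev 0) = -1" .
qed

lemma omg_ev2:
  assumes n: "1 \<le> n"
  shows "omg n (ev 0) (ev n) = 0" "omg n (ev 0) (ev (2*n)) = 1" "omg n (ev 0) (ev (3*n)) = 0"
    "omg n (ev n) (ev (2*n)) = 0" "omg n (ev n) (ev (3*n)) = 1" "omg n (ev (2*n)) (ev (3*n)) = 0"
proof -
  show "omg n (ev 0) (ev n) = 0" unfolding omg_def using n by (intro sum.neutral ballI) (simp add: ev_def)
  show "omg n (ev 0) (ev (3*n)) = 0" unfolding omg_def using n by (intro sum.neutral ballI) (simp add: ev_def)
  show "omg n (ev n) (ev (2*n)) = 0" unfolding omg_def using n by (intro sum.neutral ballI) (simp add: ev_def)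
  show "omg n (ev (2*n)) (ev (3*n)) = 0" unfolding omg_def using n by (intro sum.neutral ballI) (simp add: ev_def)
  have "omg n (ev 0) (ev (2*n)) = (\<Sum>j<n. (if j = 0 then 1 else 0))"
    unfolding omg_def by (rule sum.cong) (auto simp: ev_def)
  also have "\<dots> = 1" using n by (simp add: sum.delta)
  finally show "omg n (ev 0) (ev (2*n)) = 1" .
  have "omg n (ev n) (ev (3*n)) = (\<Sum>j<n. (if j = 0 then 1 else 0))"
    unfolding omg_def by (rule sum.cong) (auto simp: ev_def)
  also have "\<dots> = 1" using n by (simp add: sum.delta)
  finally show "omg n (ev n) (ev (3*n)) = 1" .
qed

lemma tf_zero: "torsion_form n G Gam (\<lambda>_. 0) y z = 0"
  by (simp add: torsion_form_def torsion_def conn_def lbr_def bil_def)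

lemma J3_evZ: "app n (J3m n) (ev (iZ n)) p = (if p = iE n then 1/2 else if p = iF n then -1/2 else 0)"
  by (auto simp: appJ3 J2p_def J2q_def J3c_def J3d_def ev_def idx gdim_def)
lemma J2_evZ: "app n (J2m n) (ev (iZ n)) p = (if p = iE n then 1/2 else if p = iF n then 1/2 else 0)"
  by (auto simp: appJ2 J2p_def J2q_def J2c_def J2d_def ev_def idx gdim_def)

lemma sum_EF: fixes c d :: real shows "(\<Sum>p<gdim n. (if p = iE n then c else if p = iF n then d else 0) * f p) = c * f (iE n) + d * f (iF n)"
  by (subst sum_two[where a="iE n" and b="iF n"]) (auto simp: idx gdim_def)

lemma J_spec: assumes n: "1 \<le> n" shows "app n (J3m n) v (2*n) = v 0" "app n (J2m n) v (3*n) = - v n"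
  using J3_b2[of 0 n v] J2_b3[of 0 n v] n by simp_all

lemma lbr_ev_W:
  "lbr n x y (iH n) = x (iE n) * y (iF n) - x (iF n) * y (iE n)"
  "lbr n x y (iE n) = 2 * (x (iH n) * y (iE n) - x (iE n) * y (iH n))"
  "lbr n x y (iF n) = -2 * (x (iH n) * y (iF n) - x (iF n) * y (iH n))"
  using lbr_H lbr_E lbr_F by auto

theorem mainTheorem8:
  fixes n :: nat
  assumes "n \<ge> 1"
  shows "\<exists>G J1 J2 J3. invariant_HPKT n G J1 J2 J3 \<and>
           (\<forall>Gam. hpkt_connection n G J1 J2 J3 Gam \<longrightarrow> \<not> torsion_closed n G Gam)"
proof -
  have n: "1 \<le> n" using assms by simp
  have evg: "\<And>l. l < gdim n \<Longrightarrow> ev l \<in> gvecs n" by (simp add: gvecs_def ev_def)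
  have inv: "invariant_HPKT n (Gm n) (J1m n) (J2m n) (J3m n)"
    unfolding invariant_HPKT_def hyper_paracomplex_def
    using ahp nij1 nij2 nij3 hph hpkt_Gam0 by blast
  have nc: "\<not> torsion_closed n (Gm n) Gam" if H: "hpkt_connection n (Gm n) (J1m n) (J2m n) (J3m n) Gam" for Gam
  proof
    assume C: "torsion_closed n (Gm n) Gam"
    have H1: "\<forall>x\<in>gvecs n. \<forall>y\<in>gvecs n. \<forall>z\<in>gvecs n.
        bil n (Gm n) (conn n Gam x y) z + bil n (Gm n) y (conn n Gam x z) = 0"
     and H2: "\<forall>x\<in>gvecs n. \<forall>y\<in>gvecs n.
        conn n Gam x (app n (J1m n) y) = app n (J1m n) (conn n Gam x y) \<and>
        conn n Gam x (app n (J2m n) y) = app n (J2m n) (conn n Gam x y) \<and>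
        conn n Gam x (app n (J3m n) y) = app n (J3m n) (conn n Gam x y)"
     and H3: "\<forall>x\<in>gvecs n. \<forall>y\<in>gvecs n. \<forall>z\<in>gvecs n.
        torsion_form n (Gm n) Gam x y z = - torsion_form n (Gm n) Gam x z y"
      using H unfolding hpkt_connection_def by blast+
    have e0: "conn n Gam (ev n) (app n (J3m n) (ev (iZ n))) (2*n) = app n (J3m n) (conn n Gam (ev n) (ev (iZ n))) (2*n)"
      using H2 evg idx_lt by metis
    have e1: "conn n Gam (ev 0) (app n (J2m n) (ev (iZ n))) (3*n) = app n (J2m n) (conn n Gam (ev 0) (ev (iZ n))) (3*n)"
      using H2 evg idx_lt by metis
    have e2: "bil n (Gm n) (conn n Gam (ev (iE n)) (ev 0)) (ev 0) + bil n (Gm n) (ev 0) (conn n Gam (ev (iE n)) (ev 0)) = 0"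
      using H1 evg idx_lt by blast
    have e3: "bil n (Gm n) (conn n Gam (ev 0) (ev (iZ n))) (ev (2*n)) + bil n (Gm n) (ev (iZ n)) (conn n Gam (ev 0) (ev (2*n))) = 0"
      using H1 evg idx_lt by blast
    have e4: "bil n (Gm n) (conn n Gam (ev (iF n)) (ev n)) (ev n) + bil n (Gm n) (ev n) (conn n Gam (ev (iF n)) (ev n)) = 0"
      using H1 evg idx_lt by blast
    have e5: "bil n (Gm n) (conn n Gam (ev (iE n)) (ev n)) (ev n) + bil n (Gm n) (ev n) (conn n Gam (ev (iE n)) (ev n)) = 0"
      using H1 evg idx_lt by blast
    have e6: "bil n (Gm n) (conn n Gam (ev (iZ n)) (ev n)) (ev (3*n)) + bil n (Gm n) (ev n) (conn n Gam (ev (iZ n)) (ev (3*n))) = 0"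
      using H1 evg idx_lt by blast
    have e7: "bil n (Gm n) (conn n Gam (ev (iF n)) (ev 0)) (ev 0) + bil n (Gm n) (ev 0) (conn n Gam (ev (iF n)) (ev 0)) = 0"
      using H1 evg idx_lt by blast
    have e8: "bil n (Gm n) (conn n Gam (ev (iZ n)) (ev (2*n))) (ev 0) + bil n (Gm n) (ev (2*n)) (conn n Gam (ev (iZ n)) (ev 0)) = 0"
      using H1 evg idx_lt by blast
    have e9: "bil n (Gm n) (conn n Gam (ev n) (ev (iZ n))) (ev (3*n)) + bil n (Gm n) (ev (iZ n)) (conn n Gam (ev n) (ev (3*n))) = 0"
      using H1 evg idx_lt by blast
    have e10: "torsion_form n (Gm n) Gam (ev (3*n)) (ev (iZ n)) (ev n) = - torsion_form n (Gm n) Gam (ev (3*n)) (ev n) (ev (iZ n))"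
      using H3 evg idx_lt by blast
    have e11: "torsion_form n (Gm n) Gam (ev n) (ev n) (ev (iF n)) = - torsion_form n (Gm n) Gam (ev n) (ev (iF n)) (ev n)"
      using H3 evg idx_lt by blast
    have e12: "bil n (Gm n) (conn n Gam (ev (3*n)) (ev (iZ n))) (ev n) + bil n (Gm n) (ev (iZ n)) (conn n Gam (ev (3*n)) (ev n)) = 0"
      using H1 evg idx_lt by blast
    have e13: "torsion_form n (Gm n) Gam (ev (2*n)) (ev (iZ n)) (ev 0) = - torsion_form n (Gm n) Gam (ev (2*n)) (ev 0) (ev (iZ n))"
      using H3 evg idx_lt by blast
    have e14: "bil n (Gm n) (conn n Gam (ev (2*n)) (ev (iZ n))) (ev 0) + bil n (Gm n) (ev (iZ n)) (conn n Gam (ev (2*n)) (ev 0)) = 0"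
      using H1 evg idx_lt by blast
    have e15: "torsion_form n (Gm n) Gam (ev (iF n)) (ev 0) (ev 0) = - torsion_form n (Gm n) Gam (ev (iF n)) (ev 0) (ev 0)"
      using H3 evg idx_lt by blast
    have e16: "torsion_form n (Gm n) Gam (ev 0) (ev 0) (ev (iE n)) = - torsion_form n (Gm n) Gam (ev 0) (ev (iE n)) (ev 0)"
      using H3 evg idx_lt by blast
    have e17: "torsion_form n (Gm n) Gam (ev (iE n)) (ev n) (ev n) = - torsion_form n (Gm n) Gam (ev (iE n)) (ev n) (ev n)"
      using H3 evg idx_lt by blast
    note ss = bilG_ev[OF n] bilG_evl conn_ev idx_lt idx_ne[OF n] torsion_form_def tor_cf lbr_V0[OF n]
      lbr_Z omg_ev[OF n] lbr_ev_W ev_app conn_evl J3_evZ J2_evZ sum_EF J_spec[OF n] sum_ev1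
    note f0 = e0[simplified ss] e1[simplified ss] e2[simplified ss] e3[simplified ss] e4[simplified ss]
      e5[simplified ss] e6[simplified ss] e10[simplified ss] e11[simplified ss] e13[simplified ss] e15[simplified ss]
    have C0: "- torsion_form n (Gm n) Gam (lbr n (ev 0) (ev n)) (ev (2*n)) (ev (3*n))
        + torsion_form n (Gm n) Gam (lbr n (ev 0) (ev (2*n))) (ev n) (ev (3*n))
        - torsion_form n (Gm n) Gam (lbr n (ev 0) (ev (3*n))) (ev n) (ev (2*n))
        - torsion_form n (Gm n) Gam (lbr n (ev n) (ev (2*n))) (ev 0) (ev (3*n))
        + torsion_form n (Gm n) Gam (lbr n (ev n) (ev (3*n))) (ev 0) (ev (2*n))
        - torsion_form n (Gm n) Gam (lbr n (ev (2*n)) (ev (3*n))) (ev 0) (ev n) = 0"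
      using C evg idx_lt unfolding torsion_closed_def Let_def by blast
    have Ls: "lbr n (ev 0) (ev n) = (\<lambda>_. 0)" "lbr n (ev 0) (ev (2*n)) = ev (iZ n)"
      "lbr n (ev 0) (ev (3*n)) = (\<lambda>_. 0)" "lbr n (ev n) (ev (2*n)) = (\<lambda>_. 0)"
      "lbr n (ev n) (ev (3*n)) = ev (iZ n)" "lbr n (ev (2*n)) (ev (3*n)) = (\<lambda>_. 0)"
      by (rule vec_eqI[where n=n]; simp add: lbr_b lbr_Z omg_ev2[OF n] lbr_ev_W ev_app lbr_out idx_ne[OF n];
          simp add: idx gdim_def)+
    note C1 = C0[unfolded Ls tf_zero, simplified ss]
    show False using f0 C1 e7[simplified ss] e8[simplified ss] e9[simplified ss] e12[simplified ss] e14[simplified ss]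
      e16[simplified ss] e17[simplified ss] by simp
  qed
  show ?thesis using inv nc by blast
qed

end
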